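(* Let $S$ and $T$ be Polish spaces, $\Delta_\infty=\{(w_j)_{j\ge1}:w_j\ge0,\ \sum_jw_j=1\}$, and let $G$ be a probability kernel from $S$ into $T$ such that $G(\cdot\mid s_n)\to G(\cdot\mid s)$ weakly whenever $s_n\to s$ in $S$. Then the mapping $[(s_1,s_2,\dots),(w_1,w_2,\dots)]\mapsto\sum_{j\ge1}w_jG(\cdot\mid s_j)$ from $S^\infty\times\Delta_\infty$ (product topology) into the space $\mathcal{P}(T)$ of probability measures on $T$ (weak topology) is continuous. *)

theory Defs
  imports "HOL-Analysis.Analysis" "HOL-Probability.Probability"
begin

definition prob_measures :: "('b::topological_space) measure set" where
  "prob_measures = {M. sets M = sets borel \<and> prob_space M}"

definition bcontinuous :: "('b::topological_space \<Rightarrow> real) \<Rightarrow> bool" where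
  "bcontinuous f \<longleftrightarrow> continuous_on UNIV f \<and> bounded (range f)"

definition weak_conv_to :: "(nat \<Rightarrow> ('b::topological_space) measure) \<Rightarrow> 'b measure \<Rightarrow> bool" where
  "weak_conv_to Ms M \<longleftrightarrow>
     (\<forall>f. bcontinuous f \<longrightarrow> (\<lambda>n. \<integral>x. f x \<partial>Ms n) \<longlonglongrightarrow> (\<integral>x. f x \<partial>M))"

definition weak_topology :: "('b::topological_space) measure topology" where
  "weak_topology = topology_generated_by
     {{M \<in> prob_measures. (\<integral>x. f x \<partial>M) \<in> U} | f U. bcontinuous f \<and> open U}"

text \<open>The infinite simplex \<Delta>_\<infinity> (indexed from 0).\<close>
definition simplex_inf :: "(nat \<Rightarrow> real) set" where
  "simplex_inf = {w. (\<forall>j. 0 \<le> w j) \<and> w sums 1}"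

definition mixture :: "('a \<Rightarrow> ('b::topological_space) measure) \<Rightarrow> (nat \<Rightarrow> 'a) \<Rightarrow> (nat \<Rightarrow> real) \<Rightarrow> 'b measure" where
  "mixture G s w = measure_of UNIV (sets borel)
     (\<lambda>A. \<Sum>j. ennreal (w j) * emeasure (G (s j)) A)"

end

theory Submission
  imports Defs
begin


lemma mix_facts:
  fixes G :: "'a \<Rightarrow> 'b::topological_space measure"
  assumes prob: "\<And>t. G t \<in> prob_measures" and w: "w \<in> simplex_inf"
  defines "N \<equiv> density (count_space UNIV) (\<lambda>j. ennreal (w j))"
  shows "prob_space N" and "(\<lambda>j. G (s j)) \<in> N \<rightarrow>\<^sub>M prob_algebra borel"
    and "mixture G s w = N \<bind> (\<lambda>j. G (s j))"
proof -
  have w0: "\<And>j. 0 \<le> w j" and ws: "w sums 1" using w by (auto simp: simplex_inf_def)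
  have K: "(\<lambda>j. G (s j)) \<in> N \<rightarrow>\<^sub>M prob_algebra borel"
    unfolding N_def using prob
    by (auto simp: measurable_count_space_eq1 space_prob_algebra prob_measures_def)
  show "(\<lambda>j. G (s j)) \<in> N \<rightarrow>\<^sub>M prob_algebra borel" by (rule K)
  have "emeasure N (space N) = (\<Sum>j. ennreal (w j))"
    unfolding N_def by (simp add: emeasure_density nn_integral_count_space_nat)
  also have "\<dots> = 1" using w0 ws by (simp add: suminf_ennreal2 sums_summable sums_unique[symmetric])
  finally show PN: "prob_space N" by (rule prob_spaceI)
  have sN: "space N \<noteq> {}" unfolding N_def by simp
  have Ksub: "(\<lambda>j. G (s j)) \<in> N \<rightarrow>\<^sub>M subprob_algebra borel" using K by (rule measurable_prob_algebraD)
  have sb: "sets (N \<bind> (\<lambda>j. G (s j))) = sets borel"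
    using sets_bind_measurable[OF Ksub sN] .
  have spb: "space (N \<bind> (\<lambda>j. G (s j))) = UNIV"
    using sets_eq_imp_space_eq[OF sb] by simp
  have "N \<bind> (\<lambda>j. G (s j)) = measure_of UNIV (sets borel) (emeasure (N \<bind> (\<lambda>j. G (s j))))"
    using measure_of_of_measure[of "N \<bind> (\<lambda>j. G (s j))"] sb spb by simp
  also have "\<dots> = mixture G s w"
    unfolding mixture_def
  proof (rule measure_of_eq)
    show "sets borel \<subseteq> Pow UNIV" by simp
    fix A :: "'b set" assume "A \<in> sigma_sets UNIV (sets borel)"
    then have A: "A \<in> sets borel" using sets.sigma_sets_eq[of borel] by (metis space_borel)
    have "emeasure (N \<bind> (\<lambda>j. G (s j))) A = (\<integral>\<^sup>+j. emeasure (G (s j)) A \<partial>N)"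
      by (rule emeasure_bind[OF sN Ksub A])
    also have "\<dots> = (\<integral>\<^sup>+j. ennreal (w j) * emeasure (G (s j)) A \<partial>count_space UNIV)"
      unfolding N_def by (subst nn_integral_density) auto
    also have "\<dots> = (\<Sum>j. ennreal (w j) * emeasure (G (s j)) A)"
      by (simp add: nn_integral_count_space_nat)
    finally show "emeasure (N \<bind> (\<lambda>j. G (s j))) A = (\<Sum>j. ennreal (w j) * emeasure (G (s j)) A)" .
  qed
  finally show "mixture G s w = N \<bind> (\<lambda>j. G (s j))" ..
qed


lemma mix_prob:
  fixes G :: "'a \<Rightarrow> 'b::topological_space measure"
  assumes prob: "\<And>s. G s \<in> prob_measures" and w: "w \<in> simplex_inf"
  shows "mixture G s w \<in> prob_measures"
proof -
  define N where "N = density (count_space UNIV) (\<lambda>j. ennreal (w j))"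
  have F: "prob_space N" "(\<lambda>j. G (s j)) \<in> N \<rightarrow>\<^sub>M prob_algebra borel" "mixture G s w = N \<bind> (\<lambda>j. G (s j))"
    using mix_facts[where G=G, OF prob w] unfolding N_def by auto
  have A1: "N \<in> space (prob_algebra (count_space UNIV))"
    using F(1) by (simp add: space_prob_algebra N_def)
  have B1: "(\<lambda>j. G (s j)) \<in> count_space UNIV \<rightarrow>\<^sub>M prob_algebra borel"
    using prob by (auto simp: measurable_count_space_eq1 space_prob_algebra prob_measures_def)
  have "prob_space (N \<bind> (\<lambda>j. G (s j)))" "sets (N \<bind> (\<lambda>j. G (s j))) = sets borel"
    by (rule prob_space_bind'[OF A1 B1], rule sets_bind'[OF A1 B1])
  then show ?thesis using F(3) by (simp add: prob_measures_def)
qed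

lemma mix_integral:
  fixes G :: "'a \<Rightarrow> 'b::topological_space measure" and f :: "'b \<Rightarrow> real"
  assumes prob: "\<And>s. G s \<in> prob_measures" and w: "w \<in> simplex_inf"
    and fm: "f \<in> borel_measurable borel" and fb: "\<And>x. \<bar>f x\<bar> \<le> B"
  shows "(\<lambda>j. w j * (\<integral>x. f x \<partial>G (s j))) sums (\<integral>x. f x \<partial>mixture G s w)"
proof -
  have w0: "\<And>j. 0 \<le> w j" and ws: "w sums 1" using w by (auto simp: simplex_inf_def)
  define N where "N = density (count_space UNIV) (\<lambda>j. ennreal (w j))"
  have F: "prob_space N" "(\<lambda>j. G (s j)) \<in> N \<rightarrow>\<^sub>M prob_algebra borel" "mixture G s w = N \<bind> (\<lambda>j. G (s j))"
    using mix_facts[where G=G, OF prob w] unfolding N_def by auto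
  interpret N: prob_space N by (rule F(1))
  have Ksub: "(\<lambda>j. G (s j)) \<in> N \<rightarrow>\<^sub>M subprob_algebra borel" using F(2) by (rule measurable_prob_algebraD)
  have "(\<integral>x. f x \<partial>mixture G s w) = (\<integral>j. (\<integral>x. f x \<partial>G (s j)) \<partial>N)"
    unfolding F(3)
  proof (rule integral_bind[OF fm _ Ksub, where B=B and B'=1])
    show "finite_measure N" by (rule N.finite_measure_axioms)
    show "\<And>x. x \<in> space borel \<Longrightarrow> \<bar>f x\<bar> \<le> B" using fb by simp
    show "AE x in N. emeasure (G (s x)) (space (G (s x))) \<le> ennreal 1"
      using prob by (simp add: prob_measures_def prob_space.emeasure_space_1)
  qed
  also have "\<dots> = (\<integral>j. w j * (\<integral>x. f x \<partial>G (s j)) \<partial>count_space UNIV)"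
    unfolding N_def by (subst integral_density) (simp_all add: w0)
  finally have eq: "(\<integral>x. f x \<partial>mixture G s w) = (\<integral>j. w j * (\<integral>x. f x \<partial>G (s j)) \<partial>count_space UNIV)" .
  have bnd: "\<And>j. \<bar>\<integral>x. f x \<partial>G (s j)\<bar> \<le> B"
  proof -
    fix j
    interpret P: prob_space "G (s j)" using prob by (simp add: prob_measures_def)
    have fmj: "f \<in> borel_measurable (G (s j))"
    proof -
      have "sets (G (s j)) = sets borel" using prob[of "s j"] by (simp add: prob_measures_def)
      then show ?thesis using fm measurable_cong_sets[of "G (s j)" borel borel borel] by simp
    qed
    have i1: "integrable (G (s j)) (\<lambda>x. \<bar>f x\<bar>)"
      by (rule P.integrable_const_bound[where B=B]) (use fmj fb in auto)
    have "\<bar>\<integral>x. f x \<partial>G (s j)\<bar> \<le> (\<integral>x. \<bar>f x\<bar> \<partial>G (s j))" by (rule integral_abs_bound)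
    also have "\<dots> \<le> (\<integral>x. B \<partial>G (s j))"
      by (rule integral_mono[OF i1]) (use fb in auto)
    also have "\<dots> = B" by (simp add: P.prob_space)
    finally show "\<bar>\<integral>x. f x \<partial>G (s j)\<bar> \<le> B" .
  qed
  have "integrable (count_space UNIV) (\<lambda>j. w j * (\<integral>x. f x \<partial>G (s j)))"
    unfolding integrable_count_space_nat_iff
  proof (rule summable_comparison_test)
    show "\<exists>N. \<forall>n\<ge>N. norm (norm (w n * (\<integral>x. f x \<partial>G (s n)))) \<le> B * w n"
    proof (intro exI allI impI)
      fix n
      have "\<bar>w n * (\<integral>x. f x \<partial>G (s n))\<bar> = w n * \<bar>\<integral>x. f x \<partial>G (s n)\<bar>" using w0[of n] by (simp add: abs_mult)
      also have "\<dots> \<le> w n * B" using bnd[of n] w0[of n] by (rule mult_left_mono)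
      finally show "norm (norm (w n * (\<integral>x. f x \<partial>G (s n)))) \<le> B * w n" by (simp add: mult.commute)
    qed
    show "summable (\<lambda>n. B * w n)" using ws by (intro summable_mult sums_summable)
  qed
  from sums_integral_count_space_nat[OF this] show ?thesis unfolding eq .
qed



lemma proj_cont:
  fixes \<phi> :: "'a::topological_space \<Rightarrow> real"
  assumes "continuous_on UNIV \<phi>"
  shows "continuous_map (prod_topology (product_topology (\<lambda>_::nat. (euclidean :: 'a topology)) UNIV)
                          (subtopology (product_topology (\<lambda>_::nat. (euclidean :: real topology)) UNIV) S))
           euclideanreal (\<lambda>y. snd y j * \<phi> (fst y j))"
proof (rule continuous_map_real_mult)
  have "continuous_map (subtopology (product_topology (\<lambda>_::nat. (euclidean :: real topology)) UNIV) S) euclideanreal (\<lambda>x. x j)"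
    by (rule continuous_map_from_subtopology) (rule continuous_map_product_projection[where X="\<lambda>_. euclideanreal", OF UNIV_I])
  then show "continuous_map (prod_topology (product_topology (\<lambda>_::nat. (euclidean :: 'a topology)) UNIV)
                          (subtopology (product_topology (\<lambda>_::nat. (euclidean :: real topology)) UNIV) S))
           euclideanreal (\<lambda>y. snd y j)"
    using continuous_map_compose[OF continuous_map_snd] by (simp add: o_def)
  have "continuous_map (product_topology (\<lambda>_::nat. (euclidean :: 'a topology)) UNIV) euclideanreal (\<lambda>x. \<phi> (x j))"
    using continuous_map_compose[OF continuous_map_product_projection[where X="\<lambda>_. (euclidean :: 'a topology)" and k=j and I=UNIV, simplified], of euclideanreal \<phi>] assms
    by (simp add: o_def)
  then show "continuous_map (prod_topology (product_topology (\<lambda>_::nat. (euclidean :: 'a topology)) UNIV)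
                          (subtopology (product_topology (\<lambda>_::nat. (euclidean :: real topology)) UNIV) S))
           euclideanreal (\<lambda>y. \<phi> (fst y j))"
    using continuous_map_compose[OF continuous_map_fst] by (simp add: o_def)
qed

lemma tail_bound:
  fixes a :: "nat \<Rightarrow> real"
  assumes w: "w \<in> simplex_inf" and b: "\<And>j. \<bar>a j\<bar> \<le> C * w j"
  shows "\<bar>(\<Sum>j. a j) - (\<Sum>j<N. a j)\<bar> \<le> C * (1 - (\<Sum>j<N. w j))"
proof -
  have w0: "\<And>j. 0 \<le> w j" and ws: "w sums 1" using w by (auto simp: simplex_inf_def)
  have sw: "summable w" using ws by (rule sums_summable)
  have sa: "summable a"
    by (rule summable_comparison_test[where g="\<lambda>j. C * w j"]) (use b sw in \<open>auto intro: summable_mult\<close>)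
  have swN: "summable (\<lambda>n. C * w (n + N))" using sw by (intro summable_mult) (simp add: summable_iff_shift)
  have saN: "summable (\<lambda>n. norm (a (n + N)))"
    by (rule summable_comparison_test[where g="\<lambda>n. C * w (n + N)"]) (use b swN in auto)
  have "(\<Sum>j. a j) - (\<Sum>j<N. a j) = (\<Sum>n. a (n + N))" using suminf_minus_initial_segment[OF sa] by simp
  also have "\<bar>\<dots>\<bar> \<le> (\<Sum>n. norm (a (n + N)))" using summable_norm[OF saN] by simp
  also have "\<dots> \<le> (\<Sum>n. C * w (n + N))" by (rule suminf_le) (use b saN swN in auto)
  also have "\<dots> = C * (\<Sum>n. w (n + N))" using sw by (intro suminf_mult) (simp add: summable_iff_shift)
  also have "(\<Sum>n. w (n + N)) = 1 - (\<Sum>j<N. w j)" using suminf_minus_initial_segment[OF sw] sums_unique[OF ws] by simp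
  finally show ?thesis .
qed

lemma Phi_cont:
  fixes \<phi> :: "'a::topological_space \<Rightarrow> real"
  assumes phic: "continuous_on UNIV \<phi>" and phib: "\<And>t. \<bar>\<phi> t\<bar> \<le> B"
  shows "continuous_map (prod_topology (product_topology (\<lambda>_::nat. (euclidean :: 'a topology)) UNIV)
                          (subtopology (product_topology (\<lambda>_::nat. (euclidean :: real topology)) UNIV) simplex_inf))
           euclideanreal (\<lambda>y. \<Sum>j. snd y j * \<phi> (fst y j))"
    (is "continuous_map ?X _ ?P")
proof -
  define C where "C = \<bar>B\<bar> + 1"
  have C: "C > 0" "\<And>t. \<bar>\<phi> t\<bar> \<le> C" unfolding C_def using phib
    by (auto, metis abs_ge_self add_increasing2 order.trans zero_le_one)
  have tsX: "topspace ?X = UNIV \<times> simplex_inf" by simp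
  have key: "\<bar>?P y - (\<Sum>j<N. snd y j * \<phi> (fst y j))\<bar> \<le> C * (1 - (\<Sum>j<N. snd y j))"
    if "y \<in> topspace ?X" for y N
  proof (rule tail_bound)
    show w: "snd y \<in> simplex_inf" using that tsX by auto
    fix j
    have "0 \<le> snd y j" using w by (simp add: simplex_inf_def)
    then show "\<bar>snd y j * \<phi> (fst y j)\<bar> \<le> C * snd y j"
      using C(2)[of "fst y j"] by (simp add: abs_mult mult.commute[of C] mult_left_mono)
  qed
  have Fc: "continuous_map ?X euclideanreal (\<lambda>y. \<Sum>j<N. snd y j * \<phi> (fst y j))" for N
    by (rule continuous_map_sum) (auto intro: proj_cont[OF phic])
  have Rc: "continuous_map ?X euclideanreal (\<lambda>y. 1 - (\<Sum>j<N. snd y j))" for N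
  proof -
    have "continuous_map ?X euclideanreal (\<lambda>y. \<Sum>j<N. snd y j * (\<lambda>_. 1) (fst y j))"
      by (rule continuous_map_sum) (use proj_cont[of "\<lambda>_::'a. 1::real"] in auto)
    then show ?thesis by (intro continuous_map_diff) auto
  qed
  show ?thesis
    unfolding continuous_map_def
  proof (intro conjI allI impI)
    show "?P \<in> topspace ?X \<rightarrow> topspace euclideanreal" by simp
    fix U :: "real set" assume "openin euclideanreal U"
    then have oU: "open U" by simp
    show "openin ?X {y \<in> topspace ?X. ?P y \<in> U}"
    proof (subst openin_subopen, intro ballI)
      fix x assume x: "x \<in> {y \<in> topspace ?X. ?P y \<in> U}"
      then have Px: "?P x \<in> U" by simp
      obtain e where e: "e > 0" "ball (?P x) e \<subseteq> U" using oU Px by (meson open_contains_ball)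
      define \<epsilon> where "\<epsilon> = e / (4 * C)"
      have \<epsilon>: "\<epsilon> > 0" "C * \<epsilon> = e / 4" unfolding \<epsilon>_def using e C by auto
      have "snd x \<in> simplex_inf" using x tsX by auto
      then have lim: "(\<lambda>n. \<Sum>i<n. snd x i) \<longlonglongrightarrow> 1" by (simp add: simplex_inf_def sums_def)
      obtain N where N0: "\<forall>n\<ge>N. norm ((\<Sum>i<n. snd x i) - 1) < \<epsilon>"
        using LIMSEQ_D[OF lim \<epsilon>(1)] by blast
      then have N: "\<And>n. n \<ge> N \<Longrightarrow> dist (\<Sum>i<n. snd x i) 1 < \<epsilon>" by (simp add: dist_real_def)
      define F where "F = (\<lambda>y. \<Sum>j<N. snd y j * \<phi> (fst y j))"
      define R :: "(nat \<Rightarrow> 'a) \<times> (nat \<Rightarrow> real) \<Rightarrow> real" where "R = (\<lambda>y. 1 - (\<Sum>j<N. snd y j))"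
      define T where "T = {y \<in> topspace ?X. F y \<in> ball (F x) (e/4)} \<inter> {y \<in> topspace ?X. R y \<in> {..<2*\<epsilon>}}"
      have RX: "R x < \<epsilon>" using N[of N] unfolding R_def dist_real_def by auto
      show "\<exists>T. openin ?X T \<and> x \<in> T \<and> T \<subseteq> {y \<in> topspace ?X. ?P y \<in> U}"
      proof (intro exI conjI)
        show "openin ?X T" unfolding T_def F_def R_def
          by (intro openin_Int openin_continuous_map_preimage[OF Fc] openin_continuous_map_preimage[OF Rc]) auto
        show "x \<in> T" unfolding T_def using x RX e \<epsilon> by simp
        show "T \<subseteq> {y \<in> topspace ?X. ?P y \<in> U}"
        proof
          fix y assume y: "y \<in> T"
          then have yX: "y \<in> topspace ?X" and Fy: "dist (F x) (F y) < e/4" and Ry: "R y < 2 * \<epsilon>"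
            unfolding T_def by auto
          have k1: "\<bar>?P y - F y\<bar> \<le> C * R y" using key[OF yX] unfolding F_def R_def .
          have k2: "\<bar>?P x - F x\<bar> \<le> C * R x" using key[of x] x unfolding F_def R_def by auto
          have "C * R y \<le> C * (2 * \<epsilon>)" using Ry C by (intro mult_left_mono) auto
          moreover have "C * R x \<le> C * \<epsilon>" using RX C by (intro mult_left_mono) auto
          ultimately have "\<bar>?P y - ?P x\<bar> < e"
            using k1 k2 Fy \<epsilon>(2) unfolding dist_real_def by linarith
          then have "?P y \<in> U" using e(2) by (auto simp: dist_real_def)
          then show "y \<in> {y \<in> topspace ?X. ?P y \<in> U}" using yX by auto
        qed
      qed
    qed
  qed
qed


lemma int_bound:
  fixes f :: "'b::topological_space \<Rightarrow> real"
  assumes P: "M \<in> prob_measures" and fm: "f \<in> borel_measurable borel" and fb: "\<And>x. \<bar>f x\<bar> \<le> B"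
  shows "\<bar>\<integral>x. f x \<partial>M\<bar> \<le> B"
proof -
  interpret P: prob_space M using P by (simp add: prob_measures_def)
  have fmj: "f \<in> borel_measurable M"
  proof -
    have "sets M = sets borel" using P by (simp add: prob_measures_def)
    then show ?thesis using fm measurable_cong_sets[of M borel borel borel] by simp
  qed
  have i1: "integrable M (\<lambda>x. \<bar>f x\<bar>)"
    by (rule P.integrable_const_bound[where B=B]) (use fmj fb in auto)
  have "\<bar>\<integral>x. f x \<partial>M\<bar> \<le> (\<integral>x. \<bar>f x\<bar> \<partial>M)" by (rule integral_abs_bound)
  also have "\<dots> \<le> (\<integral>x. B \<partial>M)"
    by (rule integral_mono[OF i1]) (use fb in auto)
  also have "\<dots> = B" by (simp add: P.prob_space)
  finally show ?thesis .
qed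

theorem corollary7:
  fixes G :: "'a::polish_space \<Rightarrow> 'b::polish_space measure"
  assumes kernel: "G \<in> borel \<rightarrow>\<^sub>M subprob_algebra borel"
    and prob: "\<And>s. G s \<in> prob_measures"
    and cont: "\<And>s xs. xs \<longlonglongrightarrow> s \<Longrightarrow> weak_conv_to (\<lambda>n. G (xs n)) (G s)"
  shows "continuous_map
           (prod_topology (product_topology (\<lambda>_::nat. (euclidean :: 'a topology)) UNIV)
                          (subtopology (product_topology (\<lambda>_::nat. (euclidean :: real topology)) UNIV) simplex_inf))
           weak_topology
           (\<lambda>(s, w). mixture G s w)"
    (is "continuous_map ?X _ ?m")
proof -
  have tsX: "topspace ?X = UNIV \<times> simplex_inf" by simp
  have mixP: "?m y \<in> prob_measures" if "y \<in> topspace ?X" for y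
    using mix_prob[where G=G, OF prob, of "snd y" "fst y"] that tsX by (auto simp: case_prod_beta)
  let ?S = "{{M \<in> prob_measures. (\<integral>x. f x \<partial>M) \<in> U} | (f :: 'b \<Rightarrow> real) U. bcontinuous f \<and> open U}"
  have tsW: "topspace weak_topology = \<Union>?S" unfolding weak_topology_def by simp
  have basis: "openin ?X {y \<in> topspace ?X. ?m y \<in> {M \<in> prob_measures. (\<integral>x. f x \<partial>M) \<in> V}}"
    if f: "bcontinuous f" and V: "open V" for f :: "'b \<Rightarrow> real" and V
  proof -
    from f have fc: "continuous_on UNIV f" and fbd: "bounded (range f)" by (auto simp: bcontinuous_def)
    obtain B where fb: "\<And>x. \<bar>f x\<bar> \<le> B" using fbd by (auto simp: bounded_iff)
    have fm: "f \<in> borel_measurable borel" using fc by (rule borel_measurable_continuous_onI)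
    define \<phi> where "\<phi> = (\<lambda>t. \<integral>x. f x \<partial>G t)"
    have phic: "continuous_on UNIV \<phi>"
    proof (rule continuous_on_sequentiallyI)
      fix u :: "nat \<Rightarrow> 'a" and a assume "u \<longlonglongrightarrow> a"
      then have "weak_conv_to (\<lambda>n. G (u n)) (G a)" by (rule cont)
      then show "(\<lambda>n. \<phi> (u n)) \<longlonglongrightarrow> \<phi> a" using f unfolding weak_conv_to_def \<phi>_def by blast
    qed
    have phib: "\<And>t. \<bar>\<phi> t\<bar> \<le> B" unfolding \<phi>_def using int_bound[OF prob fm fb] .
    have eq: "{y \<in> topspace ?X. ?m y \<in> {M \<in> prob_measures. (\<integral>x. f x \<partial>M) \<in> V}}
            = {y \<in> topspace ?X. (\<lambda>y. \<Sum>j. snd y j * \<phi> (fst y j)) y \<in> V}"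
    proof (intro Collect_cong conj_cong refl)
      fix y assume y: "y \<in> topspace ?X"
      have "(\<lambda>j. snd y j * \<phi> (fst y j)) sums (\<integral>x. f x \<partial>mixture G (fst y) (snd y))"
        unfolding \<phi>_def using mix_integral[where G=G, OF prob _ fm fb, of "snd y" "fst y"] y tsX by auto
      then have "(\<integral>x. f x \<partial>?m y) = (\<Sum>j. snd y j * \<phi> (fst y j))"
        by (simp add: case_prod_beta sums_unique)
      then show "(?m y \<in> {M \<in> prob_measures. (\<integral>x. f x \<partial>M) \<in> V}) = ((\<Sum>j. snd y j * \<phi> (fst y j)) \<in> V)"
        using mixP[OF y] by simp
    qed
    show ?thesis unfolding eq
      by (rule openin_continuous_map_preimage[OF Phi_cont[OF phic phib]]) (use V in simp)
  qed
  show ?thesis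
    unfolding continuous_map_def
  proof (intro conjI allI impI)
    show "?m \<in> topspace ?X \<rightarrow> topspace weak_topology"
    proof
      fix y assume y: "y \<in> topspace ?X"
      have "{M \<in> prob_measures. (\<integral>x. (\<lambda>_. 0::real) x \<partial>M) \<in> UNIV} \<in> ?S"
        by (intro CollectI exI[of _ "\<lambda>_. 0::real"] exI[of _ UNIV]) (auto simp: bcontinuous_def)
      then show "?m y \<in> topspace weak_topology" using mixP[OF y] unfolding tsW by blast
    qed
    fix U :: "'b measure set" assume "openin weak_topology U"
    then have "generate_topology_on ?S U" unfolding weak_topology_def by (rule openin_topology_generated_by)
    then show "openin ?X {y \<in> topspace ?X. ?m y \<in> U}"
    proof (induction rule: generate_topology_on.induct)
      case Empty
      then show ?case by simp
    next
      case (Int a b)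
      have "{y \<in> topspace ?X. ?m y \<in> a \<inter> b} = {y \<in> topspace ?X. ?m y \<in> a} \<inter> {y \<in> topspace ?X. ?m y \<in> b}"
        by auto
      then show ?case using Int.IH by (simp add: openin_Int)
    next
      case (UN K)
      have "{y \<in> topspace ?X. ?m y \<in> \<Union>K} = (\<Union>k\<in>K. {y \<in> topspace ?X. ?m y \<in> k})" by auto
      then show ?case using UN.IH by (auto intro!: openin_Union)
    next
      case (Basis s)
      then obtain f V where "s = {M \<in> prob_measures. (\<integral>x. f x \<partial>M) \<in> V}" "bcontinuous f" "open V"
        by blast
      then show ?case using basis by simp
    qed
  qed
qed

end
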